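(* Every primary quaternion of $H_{1,2,2}$ lies in $H_{1,2,2}^0$.
   Context: Let $\mathbf{i},\mathbf{j},\mathbf{k}$ be the standard quaternion units. $H_{1,2,2}$ is the subring of the quaternions equal to the $\mathbb{Z}$-module generated by $\mathbf{v}_1=1$, $\mathbf{v}_2=\mathbf{i}$, $\mathbf{v}_3=\tfrac12(1+\mathbf{i}+\sqrt2\,\mathbf{j})$, $\mathbf{v}_4=\tfrac12(1+\mathbf{i}+\sqrt2\,\mathbf{k})$. $H_{1,2,2}^0$ is the $\mathbb{Z}$-module generated by $1,\mathbf{i},\sqrt2\,\mathbf{j},\sqrt2\,\mathbf{k}$. Let $I = 2(1+\mathbf{i})H_{1,2,2}$ (this equals $H_{1,2,2}\,2(1+\mathbf{i})$ and the two-sided ideal generated by $2(1+\mathbf{i})$). An element $\mathbf{q}\in H_{1,2,2}$ is primary if $\mathbf{q}-1\in I$ or $\mathbf{q}-(1+2\mathbf{v}_3)\in I$. *)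

theory Defs
  imports Complex_Main
begin

text \<open>Real quaternions a + b i + c j + d k, represented by their four real coordinates,
  with the Hamilton product (i^2 = j^2 = k^2 = ijk = -1).\<close>

datatype quat = Quat (qre: real) (qi: real) (qj: real) (qk: real)

definition qadd :: "quat \<Rightarrow> quat \<Rightarrow> quat" where
  "qadd p q = Quat (qre p + qre q) (qi p + qi q) (qj p + qj q) (qk p + qk q)"

definition qsub :: "quat \<Rightarrow> quat \<Rightarrow> quat" where
  "qsub p q = Quat (qre p - qre q) (qi p - qi q) (qj p - qj q) (qk p - qk q)"

definition qscale :: "real \<Rightarrow> quat \<Rightarrow> quat" where
  "qscale r q = Quat (r * qre q) (r * qi q) (r * qj q) (r * qk q)"

definition qmul :: "quat \<Rightarrow> quat \<Rightarrow> quat" where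
  "qmul p q = Quat
     (qre p * qre q - qi p * qi q - qj p * qj q - qk p * qk q)
     (qre p * qi q + qi p * qre q + qj p * qk q - qk p * qj q)
     (qre p * qj q - qi p * qk q + qj p * qre q + qk p * qi q)
     (qre p * qk q + qi p * qj q - qj p * qi q + qk p * qre q)"

definition q1 :: quat where "q1 = Quat 1 0 0 0"
definition qI :: quat where "qI = Quat 0 1 0 0"
definition qJ :: quat where "qJ = Quat 0 0 1 0"
definition qK :: quat where "qK = Quat 0 0 0 1"

definition v1 :: quat where "v1 = q1"
definition v2 :: quat where "v2 = qI"
definition v3 :: quat where
  "v3 = qscale (1/2) (qadd (qadd q1 qI) (qscale (sqrt 2) qJ))"
definition v4 :: quat where
  "v4 = qscale (1/2) (qadd (qadd q1 qI) (qscale (sqrt 2) qK))"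

definition zcomb :: "int \<Rightarrow> int \<Rightarrow> int \<Rightarrow> int \<Rightarrow> quat \<Rightarrow> quat \<Rightarrow> quat \<Rightarrow> quat \<Rightarrow> quat" where
  "zcomb a b c d x y z w =
     qadd (qadd (qscale (of_int a) x) (qscale (of_int b) y))
          (qadd (qscale (of_int c) z) (qscale (of_int d) w))"

definition H122 :: "quat set" where
  "H122 = {zcomb a b c d v1 v2 v3 v4 | a b c d. True}"

definition H122_0 :: "quat set" where
  "H122_0 = {zcomb a b c d q1 qI (qscale (sqrt 2) qJ) (qscale (sqrt 2) qK) | a b c d. True}"

definition I122 :: "quat set" where
  "I122 = {qmul (qscale 2 (qadd q1 qI)) h | h. h \<in> H122}"

definition primary :: "quat \<Rightarrow> bool" where
  "primary q \<longleftrightarrow> q \<in> H122 \<and>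
     (qsub q q1 \<in> I122 \<or> qsub q (qadd q1 (qscale 2 v3)) \<in> I122)"

end

theory Submission
  imports Defs
begin

lemma s2: "sqrt 2 * sqrt 2 = (2::real)" by simp

theorem lemma13:
  fixes q :: quat
  assumes "q \<in> H122" and "primary q"
  shows "q \<in> H122_0"
proof -
  obtain A B C D where qq: "q = Quat A B C D" by (cases q)
  from assms(2) consider (c1) "qsub q q1 \<in> I122" | (c2) "qsub q (qadd q1 (qscale 2 v3)) \<in> I122"
    unfolding primary_def by blast
  then show ?thesis
  proof cases
    case c1
    then obtain a b c d where e: "qsub q q1 = qmul (qscale 2 (qadd q1 qI)) (zcomb a b c d v1 v2 v3 v4)"
      unfolding I122_def H122_def by blast
    from e have "A = 1 + 2*(a-b) \<and> B = 2*a+2*b+2*c+2*d \<and> C = (c-d)*sqrt 2 \<and> D = (c+d)*sqrt 2"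
      by (simp add: qq qsub_def qmul_def qscale_def qadd_def zcomb_def v1_def v2_def v3_def v4_def
          q1_def qI_def qJ_def qK_def algebra_simps)
    then show ?thesis unfolding H122_0_def
      apply (simp add: qq zcomb_def qadd_def qscale_def q1_def qI_def qJ_def qK_def)
      apply (intro conjI)
         apply (rule exI[of _ "1 + 2*(a-b)"], simp)
        apply (rule exI[of _ "2*a+2*b+2*c+2*d"], simp)
       apply (rule exI[of _ "c-d"], simp)
      apply (rule exI[of _ "c+d"], simp)
      done
  next
    case c2
    then obtain a b c d where e: "qsub q (qadd q1 (qscale 2 v3)) = qmul (qscale 2 (qadd q1 qI)) (zcomb a b c d v1 v2 v3 v4)"
      unfolding I122_def H122_def by blast
    from e have "A = 2 + 2*(a-b) \<and> B = 1+2*a+2*b+2*c+2*d \<and> C = (1+c-d)*sqrt 2 \<and> D = (c+d)*sqrt 2"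
      by (simp add: qq qsub_def qmul_def qscale_def qadd_def zcomb_def v1_def v2_def v3_def v4_def
          q1_def qI_def qJ_def qK_def algebra_simps)
    then show ?thesis unfolding H122_0_def
      apply (simp add: qq zcomb_def qadd_def qscale_def q1_def qI_def qJ_def qK_def)
      apply (intro conjI)
         apply (rule exI[of _ "2 + 2*(a-b)"], simp)
        apply (rule exI[of _ "1+2*a+2*b+2*c+2*d"], simp)
       apply (rule exI[of _ "1+c-d"], simp)
      apply (rule exI[of _ "c+d"], simp)
      done
  qed
qed

end
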